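(* Let $G$ be a finite connected graph (loops and multiple edges allowed) with $n$ vertices, maximal degree $d$, and girth $g$. Then \[ \mathrm{kiss}(G) \leq \frac{n d (d-1)^{\lfloor g/2 \rfloor}}{g}, \] with equality if and only if $G$ is a Moore graph.
   Context: A walk is a finite sequence of oriented edges in which the initial vertex of each edge after the first equals the terminal vertex of the previous one; it is closed if it starts and ends at the same vertex, and closed walks are considered up to cyclic permutation of their edges. A walk is geodesic if it never traverses an edge and immediately traverses the same edge back in the opposite direction; a closed geodesic is a closed walk that is locally geodesic (including at the base point). A cycle is a closed walk in which each vertex is the initial vertex of at most one edge of the walk. The girth of $G$ is the smallest length of a closed geodesic in $G$ (a shortest closed geodesic is a cycle). The kissing number $\mathrm{kiss}(G)$ is the number of distinct shortest oriented cycles in $G$ (oriented cycles of length equal to the girth). A Moore graph is a connected $d$-regular graph of girth $g$ whose number of vertices equals the Moore bound, namely $1 + d \sum_{j=0}^{(g-3)/2} (d-1)^j$ if $g$ is odd and $2 \sum_{j=0}^{(g-2)/2} (d-1)^j$ if $g$ is even. *)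

theory Defs
  imports Complex_Main
begin

text \<open>A finite graph with loops and multiple edges, in Serre's formalism:
  V is the vertex set, D the set of oriented edges (darts), rv the orientation
  reversal (a fixed-point-free involution of D) and org the initial vertex. Every undirected edge
  (including a loop) gives exactly two oriented edges.\<close>

definition multigraph :: "'v set \<Rightarrow> 'd set \<Rightarrow> ('d \<Rightarrow> 'd) \<Rightarrow> ('d \<Rightarrow> 'v) \<Rightarrow> bool" where
  "multigraph V D rv org \<longleftrightarrow> finite V \<and> finite D \<and>
     (\<forall>e\<in>D. rv e \<in> D \<and> rv e \<noteq> e \<and> rv (rv e) = e \<and> org e \<in> V)"

definition trm :: "('d \<Rightarrow> 'd) \<Rightarrow> ('d \<Rightarrow> 'v) \<Rightarrow> 'd \<Rightarrow> 'v" where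
  "trm rv org e = org (rv e)"

definition degree :: "'d set \<Rightarrow> ('d \<Rightarrow> 'v) \<Rightarrow> 'v \<Rightarrow> nat" where
  "degree D org v = card {e\<in>D. org e = v}"

definition max_degree :: "'v set \<Rightarrow> 'd set \<Rightarrow> ('d \<Rightarrow> 'v) \<Rightarrow> nat" where
  "max_degree V D org = Max (degree D org ` V)"

definition is_walk :: "'d set \<Rightarrow> ('d \<Rightarrow> 'd) \<Rightarrow> ('d \<Rightarrow> 'v) \<Rightarrow> 'd list \<Rightarrow> bool" where
  "is_walk D rv org ws \<longleftrightarrow> set ws \<subseteq> D \<and>
     (\<forall>i. Suc i < length ws \<longrightarrow> org (ws ! Suc i) = trm rv org (ws ! i))"

definition closed_walk :: "'d set \<Rightarrow> ('d \<Rightarrow> 'd) \<Rightarrow> ('d \<Rightarrow> 'v) \<Rightarrow> 'd list \<Rightarrow> bool" where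
  "closed_walk D rv org ws \<longleftrightarrow> ws \<noteq> [] \<and> is_walk D rv org ws \<and>
     org (hd ws) = trm rv org (last ws)"

definition closed_geodesic :: "'d set \<Rightarrow> ('d \<Rightarrow> 'd) \<Rightarrow> ('d \<Rightarrow> 'v) \<Rightarrow> 'd list \<Rightarrow> bool" where
  "closed_geodesic D rv org ws \<longleftrightarrow> closed_walk D rv org ws \<and>
     (\<forall>i<length ws. ws ! (Suc i mod length ws) \<noteq> rv (ws ! i))"

definition is_cycle :: "'d set \<Rightarrow> ('d \<Rightarrow> 'd) \<Rightarrow> ('d \<Rightarrow> 'v) \<Rightarrow> 'd list \<Rightarrow> bool" where
  "is_cycle D rv org ws \<longleftrightarrow> closed_walk D rv org ws \<and> distinct (map org ws)"

definition girth :: "'d set \<Rightarrow> ('d \<Rightarrow> 'd) \<Rightarrow> ('d \<Rightarrow> 'v) \<Rightarrow> nat" where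
  "girth D rv org = (LEAST n. \<exists>ws. closed_geodesic D rv org ws \<and> length ws = n)"

definition rot_class :: "'d list \<Rightarrow> 'd list set" where
  "rot_class ws = {rotate k ws | k. True}"

definition kiss :: "'d set \<Rightarrow> ('d \<Rightarrow> 'd) \<Rightarrow> ('d \<Rightarrow> 'v) \<Rightarrow> nat" where
  "kiss D rv org = card (rot_class `
     {ws. is_cycle D rv org ws \<and> closed_geodesic D rv org ws \<and> length ws = girth D rv org})"

definition graph_connected :: "'v set \<Rightarrow> 'd set \<Rightarrow> ('d \<Rightarrow> 'd) \<Rightarrow> ('d \<Rightarrow> 'v) \<Rightarrow> bool" where
  "graph_connected V D rv org \<longleftrightarrow> V \<noteq> {} \<and> (\<forall>u\<in>V. \<forall>v\<in>V. u = v \<or>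
     (\<exists>ws. ws \<noteq> [] \<and> is_walk D rv org ws \<and> org (hd ws) = u \<and> trm rv org (last ws) = v))"

text \<open>Moore bound; the sums run over j = 0 .. (g-3)/2 resp. j = 0 .. (g-2)/2.\<close>
definition moore_bound :: "nat \<Rightarrow> nat \<Rightarrow> nat" where
  "moore_bound d g = (if odd g then 1 + d * (\<Sum>j<(g - 1) div 2. (d - 1) ^ j)
                      else 2 * (\<Sum>j<g div 2. (d - 1) ^ j))"

definition moore_graph :: "'v set \<Rightarrow> 'd set \<Rightarrow> ('d \<Rightarrow> 'd) \<Rightarrow> ('d \<Rightarrow> 'v) \<Rightarrow> bool" where
  "moore_graph V D rv org \<longleftrightarrow> graph_connected V D rv org \<and>
     (\<exists>d. (\<forall>v\<in>V. degree D org v = d) \<and> card V = moore_bound d (girth D rv org))"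

end

theory Submission
  imports Defs
begin

locale MG =
  fixes V :: "'v set" and D :: "'d set" and rv :: "'d \<Rightarrow> 'd" and org :: "'d \<Rightarrow> 'v"
  assumes mg: "multigraph V D rv org"
begin

lemma finV: "finite V" and finD: "finite D"
  using mg unfolding multigraph_def by auto
lemma rvD: "e \<in> D \<Longrightarrow> rv e \<in> D" and rv_neq: "e \<in> D \<Longrightarrow> rv e \<noteq> e"
  and rv_rv: "e \<in> D \<Longrightarrow> rv (rv e) = e" and orgV: "e \<in> D \<Longrightarrow> org e \<in> V"
  using mg unfolding multigraph_def by auto

abbreviation tt :: "'d \<Rightarrow> 'v" where "tt e \<equiv> org (rv e)"

fun nbw :: "'d list \<Rightarrow> bool" where
  "nbw [] = True"
| "nbw [a] = (a \<in> D)"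
| "nbw (a # b # r) = (a \<in> D \<and> org b = tt a \<and> b \<noteq> rv a \<and> nbw (b # r))"

lemma nbw_Cons: "nbw (a # p) \<longleftrightarrow> a \<in> D \<and> nbw p \<and> (p \<noteq> [] \<longrightarrow> org (hd p) = tt a \<and> hd p \<noteq> rv a)"
  by (cases p) auto

lemma nbw_append: "nbw (p @ q) \<longleftrightarrow> nbw p \<and> nbw q \<and>
   (p \<noteq> [] \<and> q \<noteq> [] \<longrightarrow> org (hd q) = tt (last p) \<and> hd q \<noteq> rv (last p))"
  by (induction p rule: nbw.induct) (auto simp: nbw_Cons)

lemma nbw_set: "nbw p \<Longrightarrow> set p \<subseteq> D"
  by (induction p rule: nbw.induct) auto

lemma nbw_rev: "nbw p \<Longrightarrow> nbw (rev (map rv p))"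
proof (induction p)
  case Nil then show ?case by simp
next
  case (Cons a p)
  then show ?case
    by (cases p) (auto simp: nbw_Cons nbw_append rvD rv_rv last_rev hd_map last_map hd_rev)
qed

lemma is_walk_Cons: "is_walk D rv org (a # p) \<longleftrightarrow> a \<in> D \<and> is_walk D rv org p \<and> (p \<noteq> [] \<longrightarrow> org (hd p) = tt a)"
proof -
  have "(\<forall>i. Suc i < length (a#p) \<longrightarrow> org ((a#p) ! Suc i) = trm rv org ((a#p) ! i)) \<longleftrightarrow>
     (p \<noteq> [] \<longrightarrow> org (hd p) = tt a) \<and> (\<forall>i. Suc i < length p \<longrightarrow> org (p ! Suc i) = trm rv org (p ! i))"
    (is "?L \<longleftrightarrow> ?R")
  proof
    assume L: ?L
    show ?R
    proof (intro conjI impI allI)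
      assume "p \<noteq> []" then show "org (hd p) = tt a" using L[rule_format, of 0] by (auto simp: trm_def hd_conv_nth)
    next
      fix i assume "Suc i < length p" then show "org (p ! Suc i) = trm rv org (p ! i)"
        using L[rule_format, of "Suc i"] by auto
    qed
  next
    assume R: ?R
    show ?L
    proof (intro allI impI)
      fix i assume i: "Suc i < length (a#p)"
      show "org ((a#p) ! Suc i) = trm rv org ((a#p) ! i)"
      proof (cases i)
        case 0 then show ?thesis using R i by (auto simp: trm_def hd_conv_nth)
      next
        case (Suc j) then show ?thesis using R i by auto
      qed
    qed
  qed
  then show ?thesis unfolding is_walk_def by auto
qed

lemma nbw_iff: "nbw p \<longleftrightarrow> is_walk D rv org p \<and> (\<forall>i. Suc i < length p \<longrightarrow> p ! Suc i \<noteq> rv (p ! i))"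
proof (induction p)
  case Nil then show ?case by (simp add: is_walk_def)
next
  case (Cons a p)
  have "(\<forall>i. Suc i < length (a#p) \<longrightarrow> (a#p) ! Suc i \<noteq> rv ((a#p) ! i)) \<longleftrightarrow>
     (p \<noteq> [] \<longrightarrow> hd p \<noteq> rv a) \<and> (\<forall>i. Suc i < length p \<longrightarrow> p ! Suc i \<noteq> rv (p ! i))"
    (is "?L \<longleftrightarrow> ?R")
  proof
    assume L: ?L
    show ?R
    proof (intro conjI impI allI)
      assume "p \<noteq> []" then show "hd p \<noteq> rv a" using L[rule_format, of 0] by (auto simp: hd_conv_nth)
    next
      fix i assume "Suc i < length p" then show "p ! Suc i \<noteq> rv (p ! i)"
        using L[rule_format, of "Suc i"] by auto
    qed
  next
    assume R: ?R
    show ?L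
    proof (intro allI impI)
      fix i assume i: "Suc i < length (a#p)"
      show "(a#p) ! Suc i \<noteq> rv ((a#p) ! i)"
      proof (cases i)
        case 0 then show ?thesis using R i by (auto simp: hd_conv_nth)
      next
        case (Suc j) then show ?thesis using R i by auto
      qed
    qed
  qed
  then show ?case using Cons by (auto simp: nbw_Cons is_walk_Cons)
qed

definition cw :: "'d list \<Rightarrow> bool" where
  "cw p \<longleftrightarrow> p \<noteq> [] \<and> nbw p \<and> org (hd p) = tt (last p)"

lemma cg_iff: "closed_geodesic D rv org p \<longleftrightarrow> cw p \<and> hd p \<noteq> rv (last p)"
proof -
  have A: "(\<forall>i<length p. p ! (Suc i mod length p) \<noteq> rv (p ! i)) \<longleftrightarrow>
        (\<forall>i. Suc i < length p \<longrightarrow> p ! Suc i \<noteq> rv (p ! i)) \<and> hd p \<noteq> rv (last p)" if "p \<noteq> []"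
  proof -
    have "(\<forall>i<length p. P i) \<longleftrightarrow> (\<forall>i. Suc i < length p \<longrightarrow> P i) \<and> P (length p - 1)" for P
      using that by (metis Suc_pred' diff_less length_greater_0_conv less_Suc_eq less_one not_less_eq)
    moreover have "p ! (Suc (length p - 1) mod length p) = hd p"
      using that by (simp add: hd_conv_nth)
    moreover have "p ! (length p - 1) = last p" using that by (simp add: last_conv_nth)
    ultimately show ?thesis by auto
  qed
  show ?thesis
    unfolding closed_geodesic_def closed_walk_def cw_def nbw_iff trm_def
    using A by auto
qed


abbreviation gg where "gg \<equiv> girth D rv org"

lemma girth_le: "closed_geodesic D rv org p \<Longrightarrow> gg \<le> length p"
  unfolding girth_def by (rule Least_le) auto

lemma strip:
  assumes "cw w" "hd w = rv (last w)"
  shows "\<exists>m. cw m \<and> length m + 2 = length w"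
proof -
  obtain a w' where w: "w = a # w'" using assms(1) unfolding cw_def by (cases w) auto
  have aD: "a \<in> D" using assms(1) w unfolding cw_def by (auto simp: nbw_Cons)
  have "w' \<noteq> []" using assms aD w rv_neq by force
  then obtain m b where w': "w' = m @ [b]" by (metis rev_exhaust)
  have "nbw w" using assms(1) unfolding cw_def by simp
  then have "set w \<subseteq> D" by (rule nbw_set)
  then have bD: "b \<in> D" using w w' by auto
  have ab: "a = rv b" using assms(2) w w' by simp
  then have ba: "b = rv a" using bD rv_rv by auto
  have "m \<noteq> []"
  proof
    assume "m = []"
    then show False using assms(1) w w' ba unfolding cw_def by auto
  qed
  have nb: "nbw (a # m @ [b])" using assms(1) w w' unfolding cw_def by simp
  then have "nbw m" "org (hd m) = tt a" "tt (last m) = org b"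
    using \<open>m \<noteq> []\<close> by (auto simp: nbw_Cons nbw_append)
  then have "cw m" using \<open>m \<noteq> []\<close> ba unfolding cw_def by auto
  then show ?thesis using w w' by auto
qed

lemma cw_ge: "cw w \<Longrightarrow> gg \<le> length w"
proof (induction "length w" arbitrary: w rule: less_induct)
  case less
  show ?case
  proof (cases "hd w = rv (last w)")
    case True
    then obtain m where "cw m" "length m + 2 = length w" using strip less.prems by blast
    then show ?thesis using less.hyps[of m] by auto
  next
    case False
    then show ?thesis using less.prems girth_le cg_iff by auto
  qed
qed

lemma cw_cg: "cw w \<Longrightarrow> length w = gg \<Longrightarrow> closed_geodesic D rv org w"
  using strip cw_ge cg_iff by fastforce

definition endv :: "'v \<Rightarrow> 'd list \<Rightarrow> 'v" where
  "endv x p = (if p = [] then x else tt (last p))"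

definition path :: "'v \<Rightarrow> 'd list \<Rightarrow> 'v \<Rightarrow> bool" where
  "path x p y \<longleftrightarrow> nbw p \<and> (p \<noteq> [] \<longrightarrow> org (hd p) = x) \<and> endv x p = y"

lemma path_butlast:
  assumes "path x (p @ [b]) y" shows "path x p (org b)"
  using assms unfolding path_def endv_def by (cases "p = []") (auto simp: nbw_append)

lemma path_rev: "path x p y \<Longrightarrow> path y (rev (map rv p)) x"
proof -
  assume a: "path x p y"
  show ?thesis
  proof (cases "p = []")
    case True then show ?thesis using a by (simp add: path_def endv_def)
  next
    case False
    have "set p \<subseteq> D" using a nbw_set unfolding path_def by auto
    then have "hd p \<in> D" using False by auto
    then show ?thesis using a False
      by (auto simp: path_def endv_def nbw_rev hd_rev last_rev hd_map last_map rv_rv)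
  qed
qed

lemma cw_join:
  assumes "path x a y" "path x b y" "a \<noteq> [] \<or> b \<noteq> []" "a \<noteq> [] \<and> b \<noteq> [] \<longrightarrow> last a \<noteq> last b"
  shows "cw (a @ rev (map rv b))"
proof -
  have rb: "path y (rev (map rv b)) x" using path_rev assms(2) .
  have bD: "set b \<subseteq> D" using assms(2) nbw_set unfolding path_def by auto
  have inj: "last b \<noteq> last a \<Longrightarrow> rv (last b) \<noteq> rv (last a)" if "a \<noteq> []" "b \<noteq> []"
    using that bD assms(1) nbw_set unfolding path_def by (metis last_in_set rv_rv subsetD)
  have "nbw (a @ rev (map rv b))"
    unfolding nbw_append using assms rb inj
    by (auto simp: path_def endv_def hd_rev last_map)
  moreover have "org (hd (a @ rev (map rv b))) = tt (last (a @ rev (map rv b)))"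
    using assms rb by (cases "a = []"; cases "b = []") (auto simp: path_def endv_def hd_rev last_rev hd_append)
  ultimately show ?thesis using assms(3) unfolding cw_def by auto
qed

lemma paths_ge: "path x p y \<Longrightarrow> path x q y \<Longrightarrow> p \<noteq> q \<Longrightarrow> gg \<le> length p + length q"
proof (induction "length p + length q" arbitrary: p q y rule: less_induct)
  case less
  show ?case
  proof (cases "p \<noteq> [] \<and> q \<noteq> [] \<and> last p = last q")
    case True
    then obtain p' q' b where p: "p = p' @ [b]" and q: "q = q' @ [b]"
      by (metis append_butlast_last_id)
    have "path x p' (org b)" "path x q' (org b)" "p' \<noteq> q'"
      using path_butlast less.prems p q by auto
    then have "gg \<le> length p' + length q'" using less.hyps[of p' q' "org b"] p q by auto
    then show ?thesis using p q by auto
  next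
    case False
    have "p \<noteq> [] \<or> q \<noteq> []" using less.prems by auto
    then have "cw (p @ rev (map rv q))" using cw_join less.prems False by blast
    then show ?thesis using cw_ge by fastforce
  qed
qed

lemma join_cg:
  assumes "path x a y" "path x b y" "a \<noteq> b" "length a + length b = gg"
  shows "closed_geodesic D rv org (a @ rev (map rv b))"
proof -
  have "\<not> (a \<noteq> [] \<and> b \<noteq> [] \<and> last a = last b)"
  proof
    assume *: "a \<noteq> [] \<and> b \<noteq> [] \<and> last a = last b"
    then obtain a' b' c where a: "a = a' @ [c]" and b: "b = b' @ [c]"
      by (metis append_butlast_last_id)
    have "path x a' (org c)" "path x b' (org c)" "a' \<noteq> b'"
      using path_butlast assms a b by auto
    then have "gg \<le> length a' + length b'" by (rule paths_ge)
    then show False using assms(4) a b by simp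
  qed
  moreover have "a \<noteq> [] \<or> b \<noteq> []" using assms by auto
  ultimately have "cw (a @ rev (map rv b))" using cw_join assms by blast
  then show ?thesis using cw_cg assms(4) by simp
qed


lemma nbw_nth: "nbw w \<Longrightarrow> Suc i < length w \<Longrightarrow> org (w ! Suc i) = tt (w ! i)"
  unfolding nbw_iff is_walk_def trm_def by auto

lemma short_cg_distinct:
  assumes cg: "closed_geodesic D rv org w" and len: "length w = gg"
  shows "distinct (map org w)"
proof (rule ccontr)
  assume nd: "\<not> distinct (map org w)"
  obtain i0 j0 where ij0: "i0 < length w" "j0 < length w" "i0 \<noteq> j0" "org (w ! i0) = org (w ! j0)"
    using nd unfolding distinct_conv_nth by auto
  define i where "i = min i0 j0"
  define j where "j = max i0 j0"
  have ij: "i < j" "j < length w" "org (w ! i) = org (w ! j)"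
    using ij0 unfolding i_def j_def by (auto simp: min_def max_def)
  define s where "s = take (j - i) (drop i w)"
  have nbw: "nbw w" and ne: "w \<noteq> []" using cg cg_iff cw_def by auto
  have "drop i w = s @ drop j w"
  proof -
    have "drop (j - i) (drop i w) = drop j w" using ij by (simp add: drop_drop)
    then show ?thesis unfolding s_def by (metis append_take_drop_id)
  qed
  moreover have "nbw (drop i w)" using nbw nbw_append[of "take i w" "drop i w"] by simp
  ultimately have nb2: "nbw (s @ drop j w)" by simp
  have sne: "s \<noteq> []" using ij unfolding s_def by auto
  have dne: "drop j w \<noteq> []" using ij by simp
  have "nbw s" and junc: "org (hd (drop j w)) = tt (last s)"
    using nb2 sne dne unfolding nbw_append by auto
  have "hd s = w ! i" using ij unfolding s_def by (simp add: hd_drop_conv_nth hd_take)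
  moreover have "hd (drop j w) = w ! j" using ij by (simp add: hd_drop_conv_nth)
  ultimately have "cw s" using \<open>nbw s\<close> sne junc ij unfolding cw_def by auto
  then have "gg \<le> length s" by (rule cw_ge)
  moreover have "length s = j - i" using ij unfolding s_def by auto
  ultimately show False using ij len by auto
qed

lemma all_less_split:
  assumes "n > 0" shows "(\<forall>i<n. P i) \<longleftrightarrow> (\<forall>i. Suc i < n \<longrightarrow> P i) \<and> P (n - 1)"
  using assms by (metis Suc_pred' diff_less less_Suc_eq less_one not_less_eq)

lemma cg_cyc: "closed_geodesic D rv org w \<longleftrightarrow> w \<noteq> [] \<and> set w \<subseteq> D \<and>
   (\<forall>i<length w. org (w ! (Suc i mod length w)) = tt (w ! i) \<and> w ! (Suc i mod length w) \<noteq> rv (w ! i))"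
proof (cases "w = []")
  case True then show ?thesis by (simp add: closed_geodesic_def closed_walk_def)
next
  case False
  then have l: "length w > 0" by auto
  have e1: "w ! (Suc (length w - 1) mod length w) = hd w" using False by (simp add: hd_conv_nth)
  have e2: "w ! (length w - 1) = last w" using False by (simp add: last_conv_nth)
  have e3: "\<And>i. Suc i < length w \<Longrightarrow> Suc i mod length w = Suc i" by simp
  show ?thesis
    unfolding closed_geodesic_def closed_walk_def is_walk_def trm_def
    using False all_less_split[OF l] e1 e2 e3 by (auto simp del: mod_Suc)
qed

lemma cg_rotate:
  assumes "closed_geodesic D rv org w" shows "closed_geodesic D rv org (rotate k w)"
proof -
  let ?n = "length w"
  have ne: "w \<noteq> []" and sD: "set w \<subseteq> D" and P: "\<And>i. i < ?n \<Longrightarrow> org (w ! (Suc i mod ?n)) = tt (w ! i) \<and> w ! (Suc i mod ?n) \<noteq> rv (w ! i)"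
    using assms cg_cyc by auto
  have "org (rotate k w ! (Suc i mod ?n)) = tt (rotate k w ! i) \<and> rotate k w ! (Suc i mod ?n) \<noteq> rv (rotate k w ! i)"
    if i: "i < ?n" for i
  proof -
    have pos: "?n > 0" using ne by auto
    have a: "rotate k w ! i = w ! ((k + i) mod ?n)" using i by (simp add: nth_rotate)
    have "rotate k w ! (Suc i mod ?n) = w ! ((k + Suc i mod ?n) mod ?n)"
      using pos by (simp add: nth_rotate)
    also have "(k + Suc i mod ?n) mod ?n = Suc ((k + i) mod ?n) mod ?n"
      by (simp add: mod_add_right_eq mod_Suc_eq)
    finally have b: "rotate k w ! (Suc i mod ?n) = w ! (Suc ((k + i) mod ?n) mod ?n)" .
    show ?thesis using P[of "(k + i) mod ?n"] a b pos by auto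
  qed
  then show ?thesis using ne sD cg_cyc by simp
qed

definition Gs where "Gs = {w. closed_geodesic D rv org w \<and> length w = gg}"

lemma kset_eq: "{ws. is_cycle D rv org ws \<and> closed_geodesic D rv org ws \<and> length ws = gg} = Gs"
  unfolding Gs_def is_cycle_def closed_geodesic_def using short_cg_distinct
  by (auto simp: closed_geodesic_def)

lemma finite_Gs: "finite Gs"
proof -
  have "Gs \<subseteq> {xs. set xs \<subseteq> D \<and> length xs \<le> gg}" unfolding Gs_def using cg_cyc by auto
  then show ?thesis using finite_lists_length_le[OF finD] finite_subset by blast
qed

lemma rot_class_card:
  assumes "w \<in> Gs" shows "card (rot_class w) = gg"
proof -
  have cg: "closed_geodesic D rv org w" and len: "length w = gg" using assms Gs_def by auto
  have dis: "distinct (map org w)" using short_cg_distinct cg len .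
  have ne: "w \<noteq> []" using cg cg_cyc by auto
  have eq: "rot_class w = (\<lambda>k. rotate k w) ` {..<gg}"
  proof
    show "rot_class w \<subseteq> (\<lambda>k. rotate k w) ` {..<gg}"
    proof
      fix u assume "u \<in> rot_class w"
      then obtain k where "u = rotate k w" unfolding rot_class_def by auto
      then have "u = rotate (k mod length w) w" by (metis rotate_conv_mod)
      moreover have "k mod length w < gg" using len ne by (metis length_greater_0_conv mod_less_divisor)
      ultimately show "u \<in> (\<lambda>k. rotate k w) ` {..<gg}" by auto
    qed
  qed (auto simp: rot_class_def)
  have "inj_on (\<lambda>k. rotate k w) {..<gg}"
  proof (rule inj_onI)
    fix i j assume i: "i \<in> {..<gg}" and j: "j \<in> {..<gg}" and e: "rotate i w = rotate j w"
    have "rotate i w ! 0 = rotate j w ! 0" using e by simp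
    then have "w ! i = w ! j" using i j len ne by (simp add: nth_rotate)
    then have "map org w ! i = map org w ! j" using i j len by simp
    then show "i = j" using dis i j len nth_eq_iff_index_eq[of "map org w" i j] by auto
  qed
  then show ?thesis using eq by (simp add: card_image)
qed

lemma rot_class_sym:
  assumes "u \<in> rot_class w" "w \<noteq> []" shows "rot_class u = rot_class w"
proof -
  obtain i where u: "u = rotate i w" using assms unfolding rot_class_def by auto
  let ?n = "length w"
  have "rotate k w \<in> rot_class u" for k
  proof -
    have le: "i \<le> k + ?n * Suc i" using assms(2) 
      by (metis add.commute le_add2 le_trans length_greater_0_conv mult_le_mono1 mult_Suc_right nat_mult_1 One_nat_def Suc_leI)
    have "rotate k w = rotate (k + ?n * Suc i) w" by (metis mod_mult_self1 rotate_conv_mod mult.commute)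
    also have "\<dots> = rotate (k + ?n * Suc i - i) u" using le by (simp add: u rotate_rotate)
    finally show ?thesis unfolding rot_class_def by auto
  qed
  then have "rot_class w \<subseteq> rot_class u" unfolding rot_class_def by auto
  moreover have "rot_class u \<subseteq> rot_class w" unfolding rot_class_def u by (auto simp: rotate_rotate)
  ultimately show ?thesis by auto
qed

lemma kiss_count: "gg * kiss D rv org = card Gs"
proof -
  have U: "\<Union> (rot_class ` Gs) = Gs"
  proof
    show "\<Union> (rot_class ` Gs) \<subseteq> Gs"
      unfolding rot_class_def Gs_def using cg_rotate by auto
    show "Gs \<subseteq> \<Union> (rot_class ` Gs)"
      unfolding rot_class_def by (auto intro!: bexI exI[of _ 0])
  qed
  have "gg * card (rot_class ` Gs) = card (\<Union> (rot_class ` Gs))"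
  proof (rule card_partition)
    show "finite (rot_class ` Gs)" using finite_Gs by simp
    show "finite (\<Union> (rot_class ` Gs))" using U finite_Gs by simp
    show "card c = gg" if "c \<in> rot_class ` Gs" for c using rot_class_card that by auto
    show "c1 \<inter> c2 = {}" if c1: "c1 \<in> rot_class ` Gs" and c2: "c2 \<in> rot_class ` Gs" and ne: "c1 \<noteq> c2" for c1 c2
    proof -
      obtain a b where a: "a \<in> Gs" "c1 = rot_class a" and b: "b \<in> Gs" "c2 = rot_class b" using c1 c2 by auto
      have an: "a \<noteq> []" and bn: "b \<noteq> []" using a b Gs_def cg_cyc by auto
      show "c1 \<inter> c2 = {}"
      proof (rule ccontr)
        assume "c1 \<inter> c2 \<noteq> {}"
        then obtain u where "u \<in> rot_class a" "u \<in> rot_class b" using a b by auto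
        then have "rot_class a = rot_class b" using rot_class_sym an bn by metis
        then show False using ne a b by simp
      qed
    qed
  qed
  then show ?thesis unfolding kiss_def kset_eq using U by simp
qed


abbreviation dd where "dd \<equiv> max_degree V D org"

lemma deg_le: "v \<in> V \<Longrightarrow> degree D org v \<le> dd"
  unfolding max_degree_def using finV by (simp add: Max_ge)

lemma card_D: "card D = (\<Sum>v\<in>V. degree D org v)"
proof -
  have "D = (\<Union>v\<in>V. {e\<in>D. org e = v})" using orgV by auto
  then have "card D = card (\<Union>v\<in>V. {e\<in>D. org e = v})" by simp
  also have "\<dots> = (\<Sum>v\<in>V. card {e\<in>D. org e = v})"
    by (rule card_UN_disjoint) (use finV finD in auto)
  finally show ?thesis unfolding degree_def .
qed

definition S :: "'d \<Rightarrow> 'd set" where "S e = {f\<in>D. org f = tt e} - {rv e}"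
definition Q :: "nat \<Rightarrow> 'd \<Rightarrow> 'd list set" where "Q m e = {p. length p = m \<and> nbw (e # p)}"

lemma finite_Q: "finite (Q m e)"
proof -
  have "Q m e \<subseteq> {xs. set xs \<subseteq> D \<and> length xs \<le> m}" unfolding Q_def
    using nbw_set by (fastforce simp: nbw_Cons)
  then show ?thesis using finite_lists_length_le[OF finD] finite_subset by blast
qed

lemma card_S: "e \<in> D \<Longrightarrow> card (S e) = degree D org (tt e) - 1"
  unfolding S_def degree_def using rvD finD by (subst card_Diff_singleton) auto

lemma Q_Suc: assumes eD: "e \<in> D" shows "Q (Suc m) e = (\<Union>f\<in>S e. Cons f ` Q m f)"
proof
  show "Q (Suc m) e \<subseteq> (\<Union>f\<in>S e. Cons f ` Q m f)"
  proof
    fix p assume "p \<in> Q (Suc m) e"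
    then obtain f p' where p: "p = f # p'" "length p' = m" "nbw (e # f # p')"
      unfolding Q_def by (auto simp: length_Suc_conv)
    then have "f \<in> S e" "p' \<in> Q m f" unfolding S_def Q_def by (auto simp: nbw_Cons)
    then show "p \<in> (\<Union>f\<in>S e. Cons f ` Q m f)" using p by auto
  qed
  show "(\<Union>f\<in>S e. Cons f ` Q m f) \<subseteq> Q (Suc m) e"
    unfolding Q_def S_def using eD by auto
qed

lemma card_Q_Suc: "e \<in> D \<Longrightarrow> card (Q (Suc m) e) = (\<Sum>f\<in>S e. card (Q m f))"
proof -
  assume e: "e \<in> D"
  have "card (\<Union>f\<in>S e. Cons f ` Q m f) = (\<Sum>f\<in>S e. card (Cons f ` Q m f))"
    by (rule card_UN_disjoint) (auto simp: S_def finD finite_Q)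
  also have "\<dots> = (\<Sum>f\<in>S e. card (Q m f))" by (simp add: card_image)
  finally show ?thesis using Q_Suc e by simp
qed

lemma SD: "S e \<subseteq> D" unfolding S_def by auto

lemma card_Q_le: "e \<in> D \<Longrightarrow> card (Q m e) \<le> (dd - 1) ^ m"
proof (induction m arbitrary: e)
  case 0
  have "Q 0 e = {[]}" using 0 unfolding Q_def by auto
  then show ?case by simp
next
  case (Suc m)
  have "card (Q (Suc m) e) = (\<Sum>f\<in>S e. card (Q m f))" using card_Q_Suc Suc.prems .
  also have "\<dots> \<le> (\<Sum>f\<in>S e. (dd - 1) ^ m)" using Suc.IH SD by (intro sum_mono) auto
  also have "\<dots> = card (S e) * (dd - 1) ^ m" by simp
  also have "\<dots> \<le> (dd - 1) * (dd - 1) ^ m"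
    using card_S[OF Suc.prems] deg_le[of "tt e"] orgV rvD Suc.prems by (intro mult_le_mono1) auto
  finally show ?case by simp
qed

lemma card_Q_eq: "(\<forall>v\<in>V. degree D org v = dd) \<Longrightarrow> e \<in> D \<Longrightarrow> card (Q m e) = (dd - 1) ^ m"
proof (induction m arbitrary: e)
  case 0
  have "Q 0 e = {[]}" using 0 unfolding Q_def by auto
  then show ?case by simp
next
  case (Suc m)
  have "card (Q (Suc m) e) = (\<Sum>f\<in>S e. card (Q m f))" using card_Q_Suc Suc.prems by blast
  also have "\<dots> = (\<Sum>f\<in>S e. (dd - 1) ^ m)" using Suc SD by (intro sum.cong) auto
  also have "\<dots> = card (S e) * (dd - 1) ^ m" by simp
  also have "\<dots> = (dd - 1) * (dd - 1) ^ m"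
    using card_S[of e] Suc.prems orgV rvD by auto
  finally show ?case by simp
qed

end

locale MG2 = MG +
  assumes excg: "\<exists>ws. closed_geodesic D rv org ws"
  and conn: "graph_connected V D rv org"
begin

lemma gg_ex: "\<exists>w. closed_geodesic D rv org w \<and> length w = gg"
proof -
  obtain w where "closed_geodesic D rv org w" using excg by blast
  then have "\<exists>n. \<exists>ws. closed_geodesic D rv org ws \<and> length ws = n" by blast
  then show ?thesis unfolding girth_def by (rule LeastI_ex)
qed

lemma gg_pos: "gg \<ge> 1"
  using gg_ex cg_cyc by (metis One_nat_def Suc_leI length_greater_0_conv)

lemma dd_ge2: "dd \<ge> 2"
proof -
  obtain w where w: "closed_geodesic D rv org w" using excg by blast
  have ne: "w \<noteq> []" and sD: "set w \<subseteq> D" and P: "org (w ! (Suc 0 mod length w)) = tt (w ! 0) \<and> w ! (Suc 0 mod length w) \<noteq> rv (w ! 0)"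
    using w cg_cyc by auto
  have in1: "w ! (Suc 0 mod length w) \<in> D" using sD ne by (metis length_greater_0_conv mod_less_divisor nth_mem subsetD)
  have in0: "w ! 0 \<in> D" using sD ne by (metis length_greater_0_conv nth_mem subsetD)
  have "{w ! (Suc 0 mod length w), rv (w ! 0)} \<subseteq> {e\<in>D. org e = tt (w ! 0)}"
    using P in1 in0 rvD by auto
  then have "card {w ! (Suc 0 mod length w), rv (w ! 0)} \<le> degree D org (tt (w ! 0))"
    unfolding degree_def using finD by (intro card_mono) auto
  also have "\<dots> \<le> dd" using deg_le orgV rvD in0 by auto
  finally show ?thesis using P by auto
qed

abbreviation kk where "kk \<equiv> gg div 2"

definition Ge where "Ge e = {w\<in>Gs. hd w = e}"

lemma card_Gs_sum: "card Gs = (\<Sum>e\<in>D. card (Ge e))"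
proof -
  have "Gs = (\<Union>e\<in>D. Ge e)"
    unfolding Ge_def Gs_def using cg_cyc by (auto simp: hd_conv_nth) (metis nth_mem subsetD length_greater_0_conv)
  moreover have "card (\<Union>e\<in>D. Ge e) = (\<Sum>e\<in>D. card (Ge e))"
    by (rule card_UN_disjoint) (use finD finite_Gs in \<open>auto simp: Ge_def\<close>)
  ultimately show ?thesis by simp
qed

lemma cw_split:
  assumes "cw (a @ b)" "a \<noteq> []" shows "path (tt (last a)) b (org (hd a))"
  using assms unfolding cw_def path_def endv_def nbw_append by (cases "b = []") auto

definition phi where "phi w = take kk (tl w)"

lemma Ge_split:
  assumes "w \<in> Ge e"
  shows "w = (e # phi w) @ drop (Suc kk) w" "cw w" "length w = gg"
    "path (tt (last (e # phi w))) (drop (Suc kk) w) (org e)"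
proof -
  have cg: "closed_geodesic D rv org w" and len: "length w = gg" and h: "hd w = e"
    using assms unfolding Ge_def Gs_def by auto
  have ne: "w \<noteq> []" using cg cg_cyc by auto
  then have w: "w = e # tl w" using h by auto
  have "take (Suc kk) w = e # phi w" unfolding phi_def by (subst w) simp
  then show w2: "w = (e # phi w) @ drop (Suc kk) w" by (metis append_take_drop_id)
  show cw: "cw w" using cg cg_iff by auto
  show "length w = gg" by fact
  show "path (tt (last (e # phi w))) (drop (Suc kk) w) (org e)"
    using cw_split[of "e # phi w" "drop (Suc kk) w"] cw w2 by simp
qed

lemma phi_Q: "w \<in> Ge e \<Longrightarrow> phi w \<in> Q kk e"
proof -
  assume a: "w \<in> Ge e"
  have "nbw ((e # phi w) @ drop (Suc kk) w)" using Ge_split[OF a] cw_def by metis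
  then have "nbw (e # phi w)" unfolding nbw_append by simp
  moreover have "length (phi w) = kk" using Ge_split[OF a] gg_pos unfolding phi_def by auto
  ultimately show ?thesis unfolding Q_def by auto
qed

lemma phi_inj: "inj_on phi (Ge e)"
proof (rule inj_onI)
  fix w w' assume w: "w \<in> Ge e" and w': "w' \<in> Ge e" and eq: "phi w = phi w'"
  let ?a = "e # phi w"
  have p1: "path (tt (last ?a)) (drop (Suc kk) w) (org e)" using Ge_split[OF w] by simp
  have p2: "path (tt (last ?a)) (drop (Suc kk) w') (org e)" using Ge_split[OF w'] eq by simp
  have "drop (Suc kk) w = drop (Suc kk) w'"
  proof (rule ccontr)
    assume "drop (Suc kk) w \<noteq> drop (Suc kk) w'"
    then have "gg \<le> length (drop (Suc kk) w) + length (drop (Suc kk) w')" using paths_ge p1 p2 by blast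
    then show False using Ge_split(3)[OF w] Ge_split(3)[OF w'] gg_pos by auto
  qed
  then show "w = w'" using Ge_split(1)[OF w] Ge_split(1)[OF w'] eq by metis
qed

lemma card_Ge_le: "e \<in> D \<Longrightarrow> card (Ge e) \<le> card (Q kk e)"
  using card_inj_on_le[OF phi_inj[of e] _ finite_Q] phi_Q by blast

lemma main_le: "gg * kiss D rv org \<le> card D * (dd - 1) ^ kk"
proof -
  have "gg * kiss D rv org = (\<Sum>e\<in>D. card (Ge e))" using kiss_count card_Gs_sum by simp
  also have "\<dots> \<le> (\<Sum>e\<in>D. (dd - 1) ^ kk)" using card_Ge_le card_Q_le
    by (intro sum_mono) (meson le_trans)
  finally show ?thesis by simp
qed

lemma card_D_le: "card D \<le> card V * dd"
proof -
  have "card D \<le> (\<Sum>v\<in>V. dd)" unfolding card_D using deg_le by (intro sum_mono) auto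
  then show ?thesis by simp
qed


lemma eq_iff: "gg * kiss D rv org = card V * dd * (dd - 1) ^ kk \<longleftrightarrow>
   (\<forall>v\<in>V. degree D org v = dd) \<and> (\<forall>e\<in>D. phi ` Ge e = Q kk e)"
proof -
  let ?X = "(dd - 1) ^ kk"
  have Xpos: "?X > 0" using dd_ge2 by simp
  have sumG: "gg * kiss D rv org = (\<Sum>e\<in>D. card (Ge e))" using kiss_count card_Gs_sum by simp
  have cGe: "card (phi ` Ge e) = card (Ge e)" for e using phi_inj by (simp add: card_image)
  have sub: "phi ` Ge e \<subseteq> Q kk e" for e using phi_Q by auto
  have GeX: "e \<in> D \<Longrightarrow> card (Ge e) \<le> ?X" for e using card_Ge_le card_Q_le le_trans by blast
  show ?thesis
  proof
    assume eq: "gg * kiss D rv org = card V * dd * ?X"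
    have s1: "(\<Sum>e\<in>D. card (Ge e)) \<le> card D * ?X"
      using GeX sum_mono[of D "\<lambda>e. card (Ge e)" "\<lambda>e. ?X"] by simp
    have s2: "card D * ?X \<le> card V * dd * ?X" using card_D_le by simp
    have "card D * ?X = card V * dd * ?X" using s1 s2 eq sumG by linarith
    then have cD: "card D = card V * dd" using Xpos by (metis mult_right_cancel not_less0 gr_implies_not0)
    have R: "\<forall>v\<in>V. degree D org v = dd"
    proof
      fix v assume v: "v \<in> V"
      have "(\<Sum>v\<in>V. degree D org v) = (\<Sum>v\<in>V. dd)" using cD card_D by simp
      then show "degree D org v = dd" using sum_mono_inv[of "\<lambda>v. degree D org v" V "\<lambda>v. dd" v] deg_le v finV by blast
    qed
    have "(\<Sum>e\<in>D. card (Ge e)) = (\<Sum>e\<in>D. ?X)" using s1 s2 eq sumG cD by simp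
    then have cG: "e \<in> D \<Longrightarrow> card (Ge e) = ?X" for e
      using sum_mono_inv[of "\<lambda>e. card (Ge e)" D "\<lambda>e. ?X" e] GeX finD by blast
    have "\<forall>e\<in>D. phi ` Ge e = Q kk e"
    proof
      fix e assume e: "e \<in> D"
      show "phi ` Ge e = Q kk e"
        using card_subset_eq[OF finite_Q sub] cGe cG[OF e] card_Q_eq[OF R e] by simp
    qed
    then show "(\<forall>v\<in>V. degree D org v = dd) \<and> (\<forall>e\<in>D. phi ` Ge e = Q kk e)" using R by simp
  next
    assume a: "(\<forall>v\<in>V. degree D org v = dd) \<and> (\<forall>e\<in>D. phi ` Ge e = Q kk e)"
    have cD: "card D = card V * dd" using a card_D by simp
    have "e \<in> D \<Longrightarrow> card (Ge e) = ?X" for e using a cGe[of e] card_Q_eq[of e kk] by metis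
    then have "(\<Sum>e\<in>D. card (Ge e)) = card D * ?X" by simp
    then show "gg * kiss D rv org = card V * dd * ?X" using sumG cD by simp
  qed
qed


lemma path_Cons: "nbw (e # p) \<Longrightarrow> path (org e) (e # p) (tt (last (e # p)))"
  unfolding path_def endv_def by simp

lemma ext_use:
  assumes ext: "phi ` Ge e = Q kk e" and nb: "nbw (e # p)" and len: "length p = kk"
  shows "\<exists>s. path (org e) s (tt (last (e # p))) \<and> length s = gg - Suc kk \<and> (s \<noteq> [] \<longrightarrow> hd s \<noteq> e)"
proof -
  have "p \<in> Q kk e" using nb len unfolding Q_def by simp
  then obtain w where w: "w \<in> Ge e" and pw: "p = phi w" using ext by auto
  let ?r = "drop (Suc kk) w"
  have P: "path (tt (last (e # p))) ?r (org e)" using Ge_split(4)[OF w] pw by simp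
  have cg: "closed_geodesic D rv org w" and hw: "hd w = e" using w unfolding Ge_def Gs_def by auto
  have hl: "hd w \<noteq> rv (last w)" using cg cg_iff by auto
  have "?r \<noteq> [] \<Longrightarrow> last w = last ?r"
    using Ge_split(1)[OF w] by (metis last_appendR)
  then have "?r \<noteq> [] \<longrightarrow> hd (rev (map rv ?r)) \<noteq> e"
    using hl hw by (auto simp: hd_rev last_map)
  moreover have "length (rev (map rv ?r)) = gg - Suc kk" using Ge_split(3)[OF w] by simp
  moreover have "path (org e) (rev (map rv ?r)) (tt (last (e # p)))" using path_rev[OF P] .
  ultimately show ?thesis by (metis Nil_is_rev_conv map_is_Nil_conv)
qed

lemma ext_intro:
  assumes "\<And>p. p \<in> Q kk e \<Longrightarrow> \<exists>b. path (org e) b (tt (last (e # p))) \<and> b \<noteq> e # p \<and> length b + Suc kk = gg"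
  shows "phi ` Ge e = Q kk e"
proof
  show "phi ` Ge e \<subseteq> Q kk e" using phi_Q by auto
  show "Q kk e \<subseteq> phi ` Ge e"
  proof
    fix p assume p: "p \<in> Q kk e"
    then obtain b where b: "path (org e) b (tt (last (e # p)))" "b \<noteq> e # p" "length b + Suc kk = gg"
      using assms by blast
    have nb: "nbw (e # p)" and lp: "length p = kk" using p unfolding Q_def by auto
    let ?w = "(e # p) @ rev (map rv b)"
    have "closed_geodesic D rv org ?w"
      using join_cg[OF path_Cons[OF nb] b(1)] b lp by auto
    moreover have "length ?w = gg" using b lp by simp
    moreover have "phi ?w = p" unfolding phi_def using lp by simp
    ultimately show "p \<in> phi ` Ge e" unfolding Ge_def Gs_def by (auto intro!: image_eqI[of _ _ ?w])
  qed
qed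

definition T where "T m e = {p. nbw (e # p) \<and> length p < m}"

lemma finite_T: "finite (T m e)"
proof -
  have "T m e \<subseteq> {xs. set xs \<subseteq> D \<and> length xs \<le> m}" unfolding T_def
    using nbw_set by (fastforce simp: nbw_Cons)
  then show ?thesis using finite_lists_length_le[OF finD] finite_subset by blast
qed

lemma card_T: "(\<forall>v\<in>V. degree D org v = dd) \<Longrightarrow> e \<in> D \<Longrightarrow> card (T m e) = (\<Sum>j<m. (dd - 1) ^ j)"
proof (induction m)
  case 0 then show ?case by (simp add: T_def)
next
  case (Suc m)
  have "T (Suc m) e = T m e \<union> Q m e" unfolding T_def Q_def by auto
  moreover have "T m e \<inter> Q m e = {}" unfolding T_def Q_def by auto
  ultimately have "card (T (Suc m) e) = card (T m e) + card (Q m e)"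
    using finite_T finite_Q card_Un_disjoint by metis
  then show ?case using Suc card_Q_eq by simp
qed

lemma walk_closed:
  assumes "\<And>f. f \<in> D \<Longrightarrow> org f \<in> X \<Longrightarrow> tt f \<in> X"
  shows "is_walk D rv org ws \<Longrightarrow> ws \<noteq> [] \<Longrightarrow> org (hd ws) \<in> X \<Longrightarrow> tt (last ws) \<in> X"
proof (induction ws)
  case Nil then show ?case by simp
next
  case (Cons a ws)
  then have aD: "a \<in> D" and w: "is_walk D rv org ws" and h: "ws \<noteq> [] \<longrightarrow> org (hd ws) = tt a"
    using is_walk_Cons by auto
  have "tt a \<in> X" using assms aD Cons.prems by simp
  then show ?case using Cons.IH w h by (cases "ws = []") auto
qed

lemma closed_all:
  assumes XV: "X \<subseteq> V" and x: "x \<in> X" and cl: "\<And>f. f \<in> D \<Longrightarrow> org f \<in> X \<Longrightarrow> tt f \<in> X"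
  shows "X = V"
proof
  show "V \<subseteq> X"
  proof
    fix u assume u: "u \<in> V"
    have xV: "x \<in> V" using x XV by auto
    show "u \<in> X"
    proof (cases "x = u")
      case True then show ?thesis using x by simp
    next
      case False
      then obtain ws where "ws \<noteq> []" "is_walk D rv org ws" "org (hd ws) = x" "trm rv org (last ws) = u"
        using conn u xV unfolding graph_connected_def by blast
      then show ?thesis using walk_closed[OF cl] x unfolding trm_def by blast
    qed
  qed
qed (use XV in auto)


lemma endv_V: assumes "nbw p" "x \<in> V" shows "endv x p \<in> V"
proof (cases "p = []")
  case True then show ?thesis using assms by (simp add: endv_def)
next
  case False
  have "last p \<in> D" using nbw_set[OF assms(1)] False by (metis last_in_set subsetD)
  then show ?thesis using False rvD orgV by (simp add: endv_def)
qed

section \<open>Odd girth\<close>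

definition Sv where "Sv r v = {p. nbw p \<and> (p \<noteq> [] \<longrightarrow> org (hd p) = v) \<and> length p \<le> r}"

lemma Sv_path: "p \<in> Sv r v \<Longrightarrow> path v p (endv v p)"
  unfolding Sv_def path_def by auto

lemma odd_inj: assumes "gg = 2 * r + 1" shows "inj_on (endv v) (Sv r v)"
proof (rule inj_onI)
  fix p q assume p: "p \<in> Sv r v" and q: "q \<in> Sv r v" and e: "endv v p = endv v q"
  show "p = q"
  proof (rule ccontr)
    assume "p \<noteq> q"
    then have "gg \<le> length p + length q" using paths_ge Sv_path[OF p] Sv_path[OF q] e by metis
    then show False using p q assms unfolding Sv_def by auto
  qed
qed

lemma odd_card:
  assumes R: "\<forall>v\<in>V. degree D org v = dd" and v: "v \<in> V"
  shows "card (Sv r v) = 1 + dd * (\<Sum>j<r. (dd - 1) ^ j)"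
proof -
  let ?Dv = "{e\<in>D. org e = v}"
  have eq: "Sv r v = insert [] (\<Union>e\<in>?Dv. Cons e ` T r e)"
  proof
    show "Sv r v \<subseteq> insert [] (\<Union>e\<in>?Dv. Cons e ` T r e)"
    proof
      fix p assume p: "p \<in> Sv r v"
      show "p \<in> insert [] (\<Union>e\<in>?Dv. Cons e ` T r e)"
      proof (cases p)
        case Nil then show ?thesis by simp
      next
        case (Cons e p')
        then have "e \<in> ?Dv" "p' \<in> T r e" using p unfolding Sv_def T_def by (auto simp: nbw_Cons)
        then show ?thesis using Cons by auto
      qed
    qed
    show "insert [] (\<Union>e\<in>?Dv. Cons e ` T r e) \<subseteq> Sv r v"
      unfolding Sv_def T_def by auto
  qed
  have fin: "finite (\<Union>e\<in>?Dv. Cons e ` T r e)" using finD finite_T by auto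
  have "card (\<Union>e\<in>?Dv. Cons e ` T r e) = (\<Sum>e\<in>?Dv. card (Cons e ` T r e))"
    by (rule card_UN_disjoint) (auto simp: finD finite_T)
  also have "\<dots> = (\<Sum>e\<in>?Dv. (\<Sum>j<r. (dd - 1) ^ j))"
    using card_T[OF R] by (intro sum.cong) (auto simp: card_image)
  also have "\<dots> = dd * (\<Sum>j<r. (dd - 1) ^ j)" using R v unfolding degree_def by simp
  moreover have "[] \<notin> (\<Union>e\<in>?Dv. Cons e ` T r e)" by auto
  ultimately show ?thesis using eq fin by (simp add: card_insert_disjoint)
qed

lemma odd_ball_ext:
  assumes g: "gg = 2 * r + 1" and B: "endv v ` Sv r v = V" and e: "e \<in> D" and ve: "org e = v"
  shows "phi ` Ge e = Q kk e"
proof (rule ext_intro)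
  have kk: "kk = r" using g by simp
  fix p assume p: "p \<in> Q kk e"
  have nb: "nbw (e # p)" and lp: "length p = r" using p kk unfolding Q_def by auto
  have "tt (last (e # p)) \<in> V" using endv_V[OF nb, of v] orgV e ve unfolding endv_def by auto
  then obtain q where q: "q \<in> Sv r v" and u: "endv v q = tt (last (e # p))" using B by force
  have pq: "path v q (tt (last (e # p)))" using Sv_path[OF q] u by simp
  have pa: "path v (e # p) (tt (last (e # p)))" using path_Cons[OF nb] ve by simp
  have lq: "length q \<le> r" using q unfolding Sv_def by auto
  then have ne: "q \<noteq> e # p" using lp by auto
  have "gg \<le> length (e # p) + length q" using paths_ge[OF pa pq] ne by auto
  then have "length q + Suc kk = gg" using g lp lq kk by auto
  then show "\<exists>b. path (org e) b (tt (last (e # p))) \<and> b \<noteq> e # p \<and> length b + Suc kk = gg"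
    using pq ne ve by auto
qed

lemma odd_ext_ball:
  assumes g: "gg = 2 * r + 1" and ext: "\<forall>e\<in>D. phi ` Ge e = Q kk e" and v: "v \<in> V"
  shows "endv v ` Sv r v = V"
proof (rule closed_all)
  have kk: "kk = r" using g by simp
  show "endv v ` Sv r v \<subseteq> V" using endv_V v unfolding Sv_def by auto
  show "v \<in> endv v ` Sv r v" by (rule image_eqI[of _ _ "[]"]) (auto simp: Sv_def endv_def)
  fix f assume f: "f \<in> D" and o: "org f \<in> endv v ` Sv r v"
  then obtain q where q: "q \<in> Sv r v" and u: "org f = endv v q" by auto
  have pq: "path v q (org f)" using Sv_path[OF q] u by simp
  show "tt f \<in> endv v ` Sv r v"
  proof (cases "q \<noteq> [] \<and> f = rv (last q)")
    case True
    then obtain q' b where qb: "q = q' @ [b]" by (metis append_butlast_last_id)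
    have "set q \<subseteq> D" using q nbw_set unfolding Sv_def by auto
    then have bD: "b \<in> D" using qb by auto
    have "path v q' (org b)" using path_butlast pq qb by simp
    moreover have "tt f = org b" using True qb rv_rv bD by simp
    moreover have "q' \<in> Sv r v" using q qb unfolding Sv_def by (auto simp: nbw_append)
    ultimately show ?thesis unfolding path_def by (metis image_eqI)
  next
    case False
    have nbq: "nbw (q @ [f])" using pq False f unfolding nbw_append path_def endv_def by auto
    have pqf: "path v (q @ [f]) (tt f)" using nbq pq unfolding path_def endv_def by (cases "q = []") auto
    show ?thesis
    proof (cases "length q < r")
      case True
      then have "q @ [f] \<in> Sv r v" using pqf unfolding Sv_def path_def by auto
      then show ?thesis using pqf unfolding path_def by (metis image_eqI)
    next
      case False
      then have lq: "length q = r" using q unfolding Sv_def by auto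
      obtain e p where ep: "q @ [f] = e # p" by (cases "q @ [f]") auto
      have eD: "e \<in> D" and nbe: "nbw (e # p)" using nbq ep by (auto simp: nbw_Cons)
      have ve: "org e = v" using pqf ep unfolding path_def by auto
      have lp: "length p = kk" using lq ep kk by (metis length_Cons length_append_singleton nat.inject)
      obtain s where s: "path (org e) s (tt (last (e # p)))" "length s = gg - Suc kk"
        using ext_use[OF ext[rule_format, OF eD] nbe lp] by blast
      have "s \<in> Sv r v" using s ve g kk unfolding Sv_def path_def by auto
      moreover have "endv v s = tt f" using s ve ep unfolding path_def by (metis last_snoc)
      ultimately show ?thesis by (metis image_eqI)
    qed
  qed
qed


section \<open>Even girth\<close>

definition Se where "Se r e0 = {p. nbw p \<and> p \<noteq> [] \<and> (hd p = e0 \<or> hd p = rv e0) \<and> length p \<le> r}"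

lemma Se_path: "p \<in> Se r e0 \<Longrightarrow> path (org (hd p)) p (tt (last p))"
  unfolding Se_def path_def endv_def by auto

lemma even_inj_aux:
  assumes g: "gg = 2 * r" and h: "h \<in> D" and p: "nbw (h # p')" "length p' < r"
    and q: "nbw (rv h # q')" "length q' < r" and e: "tt (last (h # p')) = tt (last (rv h # q'))"
  shows False
proof -
  have P1: "path (tt h) p' (tt (last (h # p')))" using p unfolding path_def endv_def by (auto simp: nbw_Cons)
  have P2: "path (tt h) (rv h # q') (tt (last (h # p')))" using q e unfolding path_def endv_def by auto
  have "p' \<noteq> rv h # q'" using p(1) by (auto simp: nbw_Cons)
  then have "gg \<le> length p' + length (rv h # q')" using paths_ge P1 P2 by blast
  then show False using g p q by auto
qed

lemma even_inj: assumes g: "gg = 2 * r" and e0: "e0 \<in> D" shows "inj_on (\<lambda>p. tt (last p)) (Se r e0)"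
proof (rule inj_onI)
  fix p q assume p: "p \<in> Se r e0" and q: "q \<in> Se r e0" and e: "tt (last p) = tt (last q)"
  obtain a p' where pp: "p = a # p'" using p unfolding Se_def by (cases p) auto
  obtain b q' where qq: "q = b # q'" using q unfolding Se_def by (cases q) auto
  have aD: "a \<in> D" using p pp unfolding Se_def by (auto simp: nbw_Cons)
  have bD: "b \<in> D" using q qq unfolding Se_def by (auto simp: nbw_Cons)
  show "p = q"
  proof (cases "a = b")
    case True
    have P1: "path (tt a) p' (tt (last p))" using p pp unfolding Se_def path_def endv_def by (auto simp: nbw_Cons)
    have P2: "path (tt a) q' (tt (last p))" using q qq e True unfolding Se_def path_def endv_def by (auto simp: nbw_Cons)
    show ?thesis
    proof (rule ccontr)
      assume "p \<noteq> q"
      then have "p' \<noteq> q'" using pp qq True by simp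
      then have "gg \<le> length p' + length q'" using paths_ge P1 P2 by blast
      then show False using g p q pp qq unfolding Se_def by auto
    qed
  next
    case False
    then have "b = rv a" using p q pp qq e0 rv_rv unfolding Se_def by auto
    then show ?thesis using even_inj_aux[OF g aD, of p' q'] p q pp qq e unfolding Se_def by auto
  qed
qed

lemma even_card:
  assumes R: "\<forall>v\<in>V. degree D org v = dd" and e0: "e0 \<in> D"
  shows "card (Se r e0) = 2 * (\<Sum>j<r. (dd - 1) ^ j)"
proof -
  have eq: "Se r e0 = Cons e0 ` T r e0 \<union> Cons (rv e0) ` T r (rv e0)"
  proof
    show "Se r e0 \<subseteq> Cons e0 ` T r e0 \<union> Cons (rv e0) ` T r (rv e0)"
    proof
      fix p assume p: "p \<in> Se r e0"
      then obtain a p' where pp: "p = a # p'" unfolding Se_def by (cases p) auto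
      then show "p \<in> Cons e0 ` T r e0 \<union> Cons (rv e0) ` T r (rv e0)"
        using p unfolding Se_def T_def by auto
    qed
    show "Cons e0 ` T r e0 \<union> Cons (rv e0) ` T r (rv e0) \<subseteq> Se r e0"
      unfolding Se_def T_def by auto
  qed
  have dis: "Cons e0 ` T r e0 \<inter> Cons (rv e0) ` T r (rv e0) = {}" using rv_neq[OF e0] by auto
  have "card (Se r e0) = card (Cons e0 ` T r e0) + card (Cons (rv e0) ` T r (rv e0))"
    using eq dis card_Un_disjoint finite_T by (metis finite_imageI)
  also have "\<dots> = card (T r e0) + card (T r (rv e0))" by (simp add: card_image)
  finally show ?thesis using card_T[OF R] e0 rvD by simp
qed

lemma even_ball_ext:
  assumes g: "gg = 2 * r" and B: "(\<lambda>p. tt (last p)) ` Se r e = V" and e: "e \<in> D"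
  shows "phi ` Ge e = Q kk e"
proof (rule ext_intro)
  have kk: "kk = r" using g by simp
  fix p assume p: "p \<in> Q kk e"
  have nb: "nbw (e # p)" and lp: "length p = r" using p kk unfolding Q_def by auto
  have "tt (last (e # p)) \<in> V" using endv_V[OF nb, of "org e"] orgV e unfolding endv_def by auto
  then obtain q where q: "q \<in> Se r e" and u: "tt (last q) = tt (last (e # p))" using B by force
  obtain b q' where qq: "q = b # q'" using q unfolding Se_def by (cases q) auto
  have lq: "length q' < r" using q qq unfolding Se_def by auto
  have "b \<noteq> e"
  proof
    assume be: "b = e"
    have P1: "path (tt e) p (tt (last (e # p)))" using nb unfolding path_def endv_def by (auto simp: nbw_Cons)
    have P2: "path (tt e) q' (tt (last (e # p)))" using q qq u be unfolding Se_def path_def endv_def by (auto simp: nbw_Cons)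
    have "p \<noteq> q'" using lp lq by auto
    then have "gg \<le> length p + length q'" using paths_ge P1 P2 by blast
    then show False using g lp lq by auto
  qed
  then have b: "b = rv e" using q qq unfolding Se_def by auto
  have P2: "path (org e) q' (tt (last (e # p)))"
    using q qq u b rv_rv[OF e] unfolding Se_def path_def endv_def by (auto simp: nbw_Cons)
  have pa: "path (org e) (e # p) (tt (last (e # p)))" using path_Cons[OF nb] .
  have ne: "q' \<noteq> e # p" using lp lq by auto
  have "gg \<le> length (e # p) + length q'" using paths_ge[OF pa P2] ne by auto
  then have "length q' + Suc kk = gg" using g lp lq kk by auto
  then show "\<exists>b. path (org e) b (tt (last (e # p))) \<and> b \<noteq> e # p \<and> length b + Suc kk = gg"
    using P2 ne by auto
qed

lemma even_ext_ball:
  assumes g: "gg = 2 * r" and ext: "\<forall>e\<in>D. phi ` Ge e = Q kk e" and e0: "e0 \<in> D"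
  shows "(\<lambda>p. tt (last p)) ` Se r e0 = V"
proof (rule closed_all)
  have kk: "kk = r" using g by simp
  have r1: "r \<ge> 1" using g gg_pos by auto
  show "(\<lambda>p. tt (last p)) ` Se r e0 \<subseteq> V"
  proof
    fix u assume "u \<in> (\<lambda>p. tt (last p)) ` Se r e0"
    then obtain p where "p \<in> Se r e0" "u = tt (last p)" by auto
    then show "u \<in> V" using endv_V[of p "org e0"] orgV e0 unfolding Se_def endv_def by auto
  qed
  show "tt e0 \<in> (\<lambda>p. tt (last p)) ` Se r e0"
    by (rule image_eqI[of _ _ "[e0]"]) (use e0 r1 in \<open>auto simp: Se_def\<close>)
  fix f assume f: "f \<in> D" and o: "org f \<in> (\<lambda>p. tt (last p)) ` Se r e0"
  then obtain q where q: "q \<in> Se r e0" and u: "org f = tt (last q)" by auto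
  have nq: "nbw q" and qne: "q \<noteq> []" and hq: "hd q = e0 \<or> hd q = rv e0" and lq: "length q \<le> r"
    using q unfolding Se_def by auto
  have hD: "hd q \<in> D" using nq qne nbw_set by (metis hd_in_set subsetD)
  have rhq: "rv (hd q) = e0 \<or> rv (hd q) = rv e0" using hq rv_rv e0 by auto
  show "tt f \<in> (\<lambda>p. tt (last p)) ` Se r e0"
  proof (cases "f = rv (last q)")
    case True
    obtain q' b where qb: "q = q' @ [b]" using qne by (metis append_butlast_last_id)
    have "set q \<subseteq> D" using nq nbw_set by auto
    then have bD: "b \<in> D" using qb by auto
    have tf: "tt f = org b" using True qb rv_rv bD by simp
    show ?thesis
    proof (cases "q' = []")
      case False
      have "q' \<in> Se r e0" using q qb False unfolding Se_def by (auto simp: nbw_append)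
      moreover have "tt (last q') = org b" using nq qb False by (auto simp: nbw_append)
      ultimately show ?thesis using tf by (metis image_eqI)
    next
      case True
      then have "q = [b]" using qb by simp
      then have "[rv b] \<in> Se r e0" using rhq bD rvD r1 unfolding Se_def by auto
      moreover have "tt (last [rv b]) = org b" using rv_rv bD by simp
      ultimately show ?thesis using tf by (metis image_eqI)
    qed
  next
    case False
    have nbq: "nbw (q @ [f])" using nq qne False f u unfolding nbw_append by auto
    show ?thesis
    proof (cases "length q < r")
      case True
      then have "q @ [f] \<in> Se r e0" using nbq hq qne unfolding Se_def by (auto simp: hd_append)
      then show ?thesis by (metis image_eqI last_snoc)
    next
      case False
      then have lq: "length q = r" using lq by auto
      obtain h p where ep: "q @ [f] = h # p" by (cases "q @ [f]") auto
      have hh: "h = hd q" using ep qne by (metis hd_append list.sel(1))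
      have eD: "h \<in> D" and nbe: "nbw (h # p)" using nbq ep by (auto simp: nbw_Cons)
      have lp: "length p = kk" using lq ep kk by (metis length_Cons length_append_singleton nat.inject)
      obtain s where s: "path (org h) s (tt (last (h # p)))" "length s = gg - Suc kk" "s \<noteq> [] \<longrightarrow> hd s \<noteq> h"
        using ext_use[OF ext[rule_format, OF eD] nbe lp] by blast
      have tl: "tt (last (h # p)) = tt f" using ep by (metis last_snoc)
      have "nbw (rv h # s)" using s eD rvD rv_rv unfolding path_def by (auto simp: nbw_Cons)
      then have "rv h # s \<in> Se r e0" using s rhq hh g kk r1 unfolding Se_def by auto
      moreover have "tt (last (rv h # s)) = tt f" using s tl rv_rv[OF eD] unfolding path_def endv_def
        by (cases "s = []") auto
      ultimately show ?thesis by (metis image_eqI)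
    qed
  qed
qed


lemma V_ne: "V \<noteq> {}" using conn unfolding graph_connected_def by simp

lemma D_ne: "D \<noteq> {}"
proof -
  obtain w where "closed_geodesic D rv org w" using excg by blast
  then have "w \<noteq> []" "set w \<subseteq> D" using cg_cyc by auto
  then show ?thesis by auto
qed

lemma moore_iff:
  assumes R: "\<forall>v\<in>V. degree D org v = dd"
  shows "(\<forall>e\<in>D. phi ` Ge e = Q kk e) \<longleftrightarrow> card V = moore_bound dd gg"
proof (cases "odd gg")
  case True
  define r where "r = (gg - 1) div 2"
  obtain m where m: "gg = 2 * m + 1" using True by (auto elim: oddE)
  then have rm: "r = m" unfolding r_def by simp
  have g: "gg = 2 * r + 1" using m rm by simp
  have mb: "moore_bound dd gg = 1 + dd * (\<Sum>j<r. (dd - 1) ^ j)" using True unfolding moore_bound_def r_def by simp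
  show ?thesis
  proof
    assume ext: "\<forall>e\<in>D. phi ` Ge e = Q kk e"
    obtain v where v: "v \<in> V" using V_ne by auto
    have "card V = card (endv v ` Sv r v)" using odd_ext_ball[OF g ext v] by simp
    also have "\<dots> = card (Sv r v)" using odd_inj[OF g] by (simp add: card_image)
    finally show "card V = moore_bound dd gg" using odd_card[OF R v] mb by simp
  next
    assume c: "card V = moore_bound dd gg"
    show "\<forall>e\<in>D. phi ` Ge e = Q kk e"
    proof
      fix e assume e: "e \<in> D"
      let ?v = "org e"
      have v: "?v \<in> V" using orgV e by simp
      have sub: "endv ?v ` Sv r ?v \<subseteq> V" using endv_V v unfolding Sv_def by auto
      have "card (endv ?v ` Sv r ?v) = card V"
        using odd_inj[OF g] odd_card[OF R v] mb c by (simp add: card_image)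
      then have "endv ?v ` Sv r ?v = V" using card_subset_eq[OF finV sub] by simp
      then show "phi ` Ge e = Q kk e" using odd_ball_ext[OF g _ e] by simp
    qed
  qed
next
  case False
  define r where "r = gg div 2"
  have g: "gg = 2 * r" using False r_def by simp
  have mb: "moore_bound dd gg = 2 * (\<Sum>j<r. (dd - 1) ^ j)" using False unfolding moore_bound_def r_def by simp
  show ?thesis
  proof
    assume ext: "\<forall>e\<in>D. phi ` Ge e = Q kk e"
    obtain e0 where e0: "e0 \<in> D" using D_ne by auto
    have "card V = card ((\<lambda>p. tt (last p)) ` Se r e0)" using even_ext_ball[OF g ext e0] by simp
    also have "\<dots> = card (Se r e0)" using even_inj[OF g e0] by (simp add: card_image)
    finally show "card V = moore_bound dd gg" using even_card[OF R e0] mb by simp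
  next
    assume c: "card V = moore_bound dd gg"
    show "\<forall>e\<in>D. phi ` Ge e = Q kk e"
    proof
      fix e assume e: "e \<in> D"
      have sub: "(\<lambda>p. tt (last p)) ` Se r e \<subseteq> V"
      proof
        fix u assume "u \<in> (\<lambda>p. tt (last p)) ` Se r e"
        then obtain p where "p \<in> Se r e" "u = tt (last p)" by auto
        then show "u \<in> V" using endv_V[of p "org e"] orgV e unfolding Se_def endv_def by auto
      qed
      have "card ((\<lambda>p. tt (last p)) ` Se r e) = card V"
        using even_inj[OF g e] even_card[OF R e] mb c by (simp add: card_image)
      then have "(\<lambda>p. tt (last p)) ` Se r e = V" using card_subset_eq[OF finV sub] by simp
      then show "phi ` Ge e = Q kk e" using even_ball_ext[OF g _ e] by simp
    qed
  qed
qed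

lemma moore_graph_iff: "moore_graph V D rv org \<longleftrightarrow> (\<forall>v\<in>V. degree D org v = dd) \<and> card V = moore_bound dd gg"
proof
  assume "moore_graph V D rv org"
  then obtain d' where d': "\<forall>v\<in>V. degree D org v = d'" "card V = moore_bound d' gg"
    unfolding moore_graph_def by blast
  have "degree D org ` V = {d'}" using d'(1) V_ne by auto
  then have "dd = d'" unfolding max_degree_def by simp
  then show "(\<forall>v\<in>V. degree D org v = dd) \<and> card V = moore_bound dd gg" using d' by simp
next
  assume "(\<forall>v\<in>V. degree D org v = dd) \<and> card V = moore_bound dd gg"
  then show "moore_graph V D rv org" using conn unfolding moore_graph_def by blast
qed

lemma final_nat:
  "gg * kiss D rv org \<le> card V * dd * (dd - 1) ^ kk \<and>
   (gg * kiss D rv org = card V * dd * (dd - 1) ^ kk \<longleftrightarrow> moore_graph V D rv org)"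
proof
  have "gg * kiss D rv org \<le> card D * (dd - 1) ^ kk" by (rule main_le)
  also have "\<dots> \<le> card V * dd * (dd - 1) ^ kk" using card_D_le by simp
  finally show "gg * kiss D rv org \<le> card V * dd * (dd - 1) ^ kk" .
  show "gg * kiss D rv org = card V * dd * (dd - 1) ^ kk \<longleftrightarrow> moore_graph V D rv org"
  proof -
    have "gg * kiss D rv org = card V * dd * (dd - 1) ^ kk \<longleftrightarrow>
      (\<forall>v\<in>V. degree D org v = dd) \<and> (\<forall>e\<in>D. phi ` Ge e = Q kk e)" by (rule eq_iff)
    also have "\<dots> \<longleftrightarrow> (\<forall>v\<in>V. degree D org v = dd) \<and> card V = moore_bound dd gg"
      using moore_iff by auto
    also have "\<dots> \<longleftrightarrow> moore_graph V D rv org" using moore_graph_iff by simp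
    finally show ?thesis .
  qed
qed

end

theorem theorem1p1:
  fixes V :: "'v set" and D :: "'d set" and rv :: "'d \<Rightarrow> 'd" and org :: "'d \<Rightarrow> 'v"
  assumes "multigraph V D rv org"
    and "graph_connected V D rv org"
    and "\<exists>ws. closed_geodesic D rv org ws"
  defines "n \<equiv> card V" and "d \<equiv> max_degree V D org" and "g \<equiv> girth D rv org"
  shows "real (kiss D rv org) \<le> real n * real d * (real d - 1) ^ (g div 2) / real g
         \<and> (real (kiss D rv org) = real n * real d * (real d - 1) ^ (g div 2) / real g
           \<longleftrightarrow> moore_graph V D rv org)"
proof -
  interpret MG2 V D rv org
    using assms(1-3) by (unfold_locales) auto
  have F: "g * kiss D rv org \<le> n * d * (d - 1) ^ (g div 2) \<and>
     (g * kiss D rv org = n * d * (d - 1) ^ (g div 2) \<longleftrightarrow> moore_graph V D rv org)"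
    using final_nat unfolding n_def d_def g_def .
  have gp: "g \<ge> 1" using gg_pos unfolding g_def .
  have d1: "d \<ge> 1" using dd_ge2 unfolding d_def by simp
  have X: "(real d - 1) ^ (g div 2) = real ((d - 1) ^ (g div 2))" using d1 by (simp add: of_nat_diff)
  let ?K = "real (kiss D rv org)"
  let ?B = "real n * real d * (real d - 1) ^ (g div 2)"
  have B: "?B = real (n * d * (d - 1) ^ (g div 2))" using X by simp
  have gpos: "real g > 0" using gp by simp
  have le_iff: "?K \<le> ?B / real g \<longleftrightarrow> real g * ?K \<le> ?B" using gpos by (simp add: field_simps)
  have eq_iff': "?K = ?B / real g \<longleftrightarrow> real g * ?K = ?B" using gpos by (simp add: field_simps)
  have "real g * ?K = real (g * kiss D rv org)" by simp
  then have G: "real g * ?K \<le> ?B \<and> (real g * ?K = ?B \<longleftrightarrow> moore_graph V D rv org)"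
    using F B by (simp only: of_nat_le_iff of_nat_eq_iff)
  show ?thesis using G le_iff eq_iff' by simp
qed

end
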